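(* Let $k\ge1$ and $n>1$ be integers. Define $k\uparrow\uparrow1=k$ and $k\uparrow\uparrow(j+1)=k^{\,k\uparrow\uparrow j}$ for $j\ge1$. Then the sequence $(k\uparrow\uparrow j)_{j\ge1}$ converges in the ring $\mathbb{Z}_n$ of $n$-adic integers.
   Context: For an integer $n>1$, $\mathbb{Z}_n=\varprojlim_m \mathbb{Z}/n^m\mathbb{Z}$ is the ring of $n$-adic integers; a sequence of integers converges in $\mathbb{Z}_n$ iff for every $m\ge1$ its residues modulo $n^m$ are eventually constant. *)

theory Defs
  imports Main
begin

text \<open>Tetration: tetr k 1 = k, tetr k (j+1) = k ^ (tetr k j). We set tetr k 0 = 1
  (the value at 0 is irrelevant, since the sequence is indexed from j >= 1).\<close>
fun tetr :: "nat \<Rightarrow> nat \<Rightarrow> nat" where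
  "tetr k 0 = 1"
| "tetr k (Suc j) = k ^ tetr k j"

text \<open>Convergence in the n-adic integers Z_n of an integer sequence (indexed by j >= 1):
  for every m >= 1 the residues modulo n^m are eventually constant.\<close>
definition nadic_convergent :: "int \<Rightarrow> (nat \<Rightarrow> int) \<Rightarrow> bool" where
  "nadic_convergent n a \<longleftrightarrow>
     (\<forall>m::nat. m \<ge> 1 \<longrightarrow> (\<exists>N\<ge>1. \<forall>j\<ge>N. a j mod n ^ m = a N mod n ^ m))"

end

theory Submission
  imports Defs
begin

lemma shift_per:
  fixes k M i p :: nat
  assumes "k ^ (i + p) mod M = k ^ i mod M" "x \<ge> i"
  shows "k ^ (x + p) mod M = k ^ x mod M"
proof -
  have "k ^ (x + p) = k ^ (x - i) * k ^ (i + p)" using assms(2)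
    by (metis add.assoc le_add_diff_inverse2 power_add add.commute)
  hence "k ^ (x + p) mod M = k ^ (x - i) * (k ^ (i + p) mod M) mod M" by (metis mod_mult_right_eq)
  also have "\<dots> = k ^ (x - i) * (k ^ i) mod M" using assms(1) by (metis mod_mult_right_eq)
  also have "k ^ (x - i) * (k ^ i) = k ^ x" using assms(2) by (simp add: power_add[symmetric])
  finally show ?thesis .
qed

lemma shift_mult:
  fixes k M i p :: nat
  assumes "\<forall>x\<ge>i. k ^ (x + p) mod M = k ^ x mod M" "x \<ge> i"
  shows "k ^ (x + q * p) mod M = k ^ x mod M"
proof (induction q)
  case 0 then show ?case by simp
next
  case (Suc q)
  have "k ^ (x + Suc q * p) = k ^ ((x + q * p) + p)" by (simp add: algebra_simps)
  then show ?case using assms Suc by simp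
qed

lemma cong_exp:
  fixes k M i p :: nat
  assumes "\<forall>x\<ge>i. k ^ (x + p) mod M = k ^ x mod M" "x \<ge> i" "y \<ge> i" "x mod p = y mod p"
  shows "k ^ x mod M = k ^ y mod M"
proof -
  have gen: "k ^ b mod M = k ^ a mod M" if "a \<ge> i" "a \<le> b" "a mod p = b mod p" for a b
  proof -
    have "p dvd (b - a)" using that by (metis mod_eq_dvd_iff_nat)
    then obtain q where q: "b - a = q * p" by (auto simp: dvd_def mult.commute)
    have "b = a + q * p" using q that(2) by simp
    then show ?thesis using shift_mult[OF assms(1) that(1)] by simp
  qed
  show ?thesis
  proof (cases "x \<le> y")
    case True then show ?thesis using gen[of x y] assms by simp
  next
    case False then show ?thesis using gen[of y x] assms by simp
  qed
qed

lemma pigeon: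
  fixes k M :: nat
  assumes "M \<ge> 2"
  shows "\<exists>i p. 0 < p \<and> p < M \<and> (\<forall>x\<ge>i. k ^ (x + p) mod M = k ^ x mod M)"
proof (cases "inj_on (\<lambda>t. k ^ t mod M) {1..M}")
  case False
  then obtain s t where st: "s \<in> {1..M}" "t \<in> {1..M}" "s \<noteq> t" "k ^ s mod M = k ^ t mod M"
    unfolding inj_on_def by blast
  show ?thesis
  proof (cases "s < t")
    case True
    have "k ^ (s + (t - s)) mod M = k ^ s mod M" using st True by simp
    then show ?thesis using shift_per[of k s "t - s" M] st True
      by (intro exI[of _ s] exI[of _ "t - s"]) auto
  next
    case False
    hence "t < s" using st by simp
    have "k ^ (t + (s - t)) mod M = k ^ t mod M" using st \<open>t < s\<close> by simp
    then show ?thesis using shift_per[of k t "s - t" M] st \<open>t < s\<close>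
      by (intro exI[of _ t] exI[of _ "s - t"]) auto
  qed
next
  case True
  have sub: "(\<lambda>t. k ^ t mod M) ` {1..M} \<subseteq> {0..<M}" using assms by auto
  have "card ((\<lambda>t. k ^ t mod M) ` {1..M}) = M" using True card_image by fastforce
  hence "(\<lambda>t. k ^ t mod M) ` {1..M} = {0..<M}" using sub by (simp add: card_subset_eq)
  moreover have "0 \<in> {0..<M}" using assms by simp
  ultimately obtain t where t: "k ^ t mod M = 0" by (metis (no_types, lifting) imageE)
  have "\<forall>x\<ge>t. k ^ x mod M = 0"
  proof (intro allI impI)
    fix x assume "x \<ge> t"
    hence "k ^ t dvd k ^ x" by (simp add: le_imp_power_dvd)
    moreover have "M dvd k ^ t" using t by (simp add: dvd_eq_mod_eq_0)
    ultimately have "M dvd k ^ x" by (rule dvd_trans[rotated])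
    then show "k ^ x mod M = 0" by (simp add: dvd_eq_mod_eq_0)
  qed
  then have "\<forall>x\<ge>t. k ^ (x + 1) mod M = k ^ x mod M"
  proof (intro allI impI)
    fix x assume Z: "\<forall>x\<ge>t. k ^ x mod M = 0" and x: "x \<ge> t"
    have "x + 1 \<ge> t" using x by simp
    then have "k ^ (x + 1) mod M = 0" using Z by blast
    moreover have "k ^ x mod M = 0" using Z x by blast
    ultimately show "k ^ (x + 1) mod M = k ^ x mod M" by (rule trans[OF _ sym])
  qed
  moreover have "(0::nat) < 1" "1 < M" using assms by auto
  ultimately show ?thesis by blast
qed

lemma tetr_ge: "k \<ge> 2 \<Longrightarrow> tetr k j \<ge> j"
proof (induction j)
  case 0 then show ?case by simp
next
  case (Suc j)
  have "tetr k j < 2 ^ tetr k j" by simp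
  also have "\<dots> \<le> k ^ tetr k j" using Suc.prems by (simp add: power_mono)
  finally show ?case using Suc by simp
qed

lemma main_nat:
  fixes k :: nat
  assumes "k \<ge> 2"
  shows "M \<ge> 1 \<Longrightarrow> \<exists>N. \<forall>j\<ge>N. tetr k j mod M = tetr k N mod M"
proof (induction M rule: less_induct)
  case (less M)
  show ?case
  proof (cases "M = 1")
    case True then show ?thesis by simp
  next
    case False
    with less.prems have "M \<ge> 2" by simp
    then obtain i p where ip: "0 < p" "p < M" "\<forall>x\<ge>i. k ^ (x + p) mod M = k ^ x mod M"
      using pigeon by blast
    obtain N' where N': "\<forall>j\<ge>N'. tetr k j mod p = tetr k N' mod p"
      using less.IH[of p] ip(1,2) by (metis One_nat_def Suc_leI)
    define N0 where "N0 = max N' i"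
    have "\<forall>j\<ge>Suc N0. tetr k j mod M = tetr k (Suc N0) mod M"
    proof (intro allI impI)
      fix j assume j: "j \<ge> Suc N0"
      then obtain j' where j': "j = Suc j'" "j' \<ge> N0" by (cases j) auto
      have a: "tetr k j' \<ge> i" using tetr_ge[OF assms, of j'] j' N0_def by simp
      have b: "tetr k N0 \<ge> i" using tetr_ge[OF assms, of N0] N0_def by simp
      have "j' \<ge> N'" "N0 \<ge> N'" using j' N0_def by auto
      hence c: "tetr k j' mod p = tetr k N0 mod p" using N' by metis
      show "tetr k j mod M = tetr k (Suc N0) mod M"
        using cong_exp[OF ip(3) a b c] unfolding j'(1) tetr.simps .
    qed
    then show ?thesis by blast
  qed
qed

theorem mainTheorem4:
  fixes k :: nat and n :: int
  assumes "k \<ge> 1" and "n > 1"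
  shows "nadic_convergent n (\<lambda>j. int (tetr k j))"
  unfolding nadic_convergent_def
proof (intro allI impI)
  fix m :: nat assume "m \<ge> 1"
  define M where "M = nat (n ^ m)"
  have P: "n ^ m \<ge> 1" using assms(2) by (simp add: one_le_power)
  have Mi: "int M = n ^ m" using P unfolding M_def by simp
  have M1: "M \<ge> 1" using P unfolding M_def by simp
  show "\<exists>N\<ge>1. \<forall>j\<ge>N. int (tetr k j) mod n ^ m = int (tetr k N) mod n ^ m"
  proof (cases "k = 1")
    case True
    have "tetr 1 j = 1" for j by (induction j) auto
    then show ?thesis using True by auto
  next
    case False
    then obtain N where N: "\<forall>j\<ge>N. tetr k j mod M = tetr k N mod M"
      using main_nat[of k M] assms M1 by auto
    have "\<forall>j\<ge>max N 1. int (tetr k j) mod n ^ m = int (tetr k (max N 1)) mod n ^ m"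
    proof (intro allI impI)
      fix j assume "j \<ge> max N 1"
      hence "tetr k j mod M = tetr k (max N 1) mod M" using N
        by (metis max.boundedE max.cobounded1)
      hence "int (tetr k j mod M) = int (tetr k (max N 1) mod M)" by simp
      then show "int (tetr k j) mod n ^ m = int (tetr k (max N 1)) mod n ^ m"
        by (simp add: zmod_int Mi)
    qed
    moreover have "max N 1 \<ge> 1" by simp
    ultimately show ?thesis by blast
  qed
qed

end
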